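(* Let $n$ be a positive integer and $d\in\Delta(n)$. Write $d=(d_1,\dots,d_L)$ with $d_L>0$ its last nonzero entry and let $q=\max_k d_k$, so that $d=(1,2,\dots,q,d_{q+1},\dots,d_L)$ with $d_{q+1}\le q$. Set $b_i=d_i-d_{i+1}$ for $q\le i<L$ and $b_L=d_L$. Then \[\big|\,[\,d\,]_q\,\big|=\big|\,[\,d\,]\cap\mathcal{P}(n,q)\,\big|=\prod_{i=q}^{L-1}\binom{b_i+b_{i+1}}{b_i},\] where an empty product equals $1$.
   Context: A partition of a positive integer $n$ is a finite non-increasing sequence $\alpha=(\alpha_1,\dots,\alpha_l)$ of positive integers with sum $n$; $\mathcal{P}(n)$ is the set of partitions of $n$, $\alpha_i=0$ for $i>l$, and $\mathcal{P}(n,k)$ is the set of partitions of $n$ with exactly $k$ nonzero parts. The diagonal sequence is $\delta(\alpha)=(d_k)_{k\ge1}$ with $d_k=|\{i:1\le i\le k,\ \alpha_i+i-1\ge k\}|$, trailing zeros omitted; $\Delta(n)=\{\delta(\alpha):\alpha\in\mathcal{P}(n)\}$, $[\,d\,]=\{\alpha\in\mathcal{P}(n):\delta(\alpha)=d\}$, and $[\,d\,]_k=[\,d\,]\cap\mathcal{P}(n,k)$. *)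

theory Defs
  imports Main
begin

definition partitions :: "nat \<Rightarrow> nat list set" where
  "partitions n = {\<alpha>. sorted_wrt (\<ge>) \<alpha> \<and> (\<forall>x\<in>set \<alpha>. 0 < x) \<and> sum_list \<alpha> = n}"

definition partitions_k :: "nat \<Rightarrow> nat \<Rightarrow> nat list set" where
  "partitions_k n k = {\<alpha> \<in> partitions n. length \<alpha> = k}"

definition part :: "nat list \<Rightarrow> nat \<Rightarrow> nat" where
  "part \<alpha> i = (if 1 \<le> i \<and> i \<le> length \<alpha> then \<alpha> ! (i - 1) else 0)"

text \<open>Diagonal sequence as a function k \<mapsto> d_k (k \<ge> 1); trailing zeros are implicit.\<close>
definition delta :: "nat list \<Rightarrow> nat \<Rightarrow> nat" where
  "delta \<alpha> k = card {i. 1 \<le> i \<and> i \<le> k \<and> part \<alpha> i + i - 1 \<ge> k}"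

definition Delta :: "nat \<Rightarrow> (nat \<Rightarrow> nat) set" where
  "Delta n = delta ` partitions n"

definition diag_class :: "nat \<Rightarrow> (nat \<Rightarrow> nat) \<Rightarrow> nat list set" where
  "diag_class n d = {\<alpha> \<in> partitions n. delta \<alpha> = d}"

definition diag_class_k :: "nat \<Rightarrow> (nat \<Rightarrow> nat) \<Rightarrow> nat \<Rightarrow> nat list set" where
  "diag_class_k n d k = diag_class n d \<inter> partitions_k n k"

end

theory Submission
  imports Defs "HOL-Library.Multiset"
begin

fun vld :: "nat list \<Rightarrow> bool" where
  "vld [] = True"
| "vld [x] = True"
| "vld (x # y # r) = (y \<le> Suc x \<and> vld (y # r))"

lemma vld_Cons: "vld (a # l) = ((case l of [] \<Rightarrow> True | b # _ \<Rightarrow> b \<le> Suc a) \<and> vld l)"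
  by (cases l) auto

lemma vld_nth: "vld m = (\<forall>i. Suc i < length m \<longrightarrow> m ! Suc i \<le> Suc (m ! i))"
proof (induction m rule: vld.induct)
  case (3 x y r)
  show ?case
    apply (simp add: 3)
    apply (rule iffI)
     apply clarify
    subgoal for i by (cases i) auto
    apply (intro conjI)
     apply (drule spec[of _ 0]) apply simp
    apply clarify
    subgoal for i by (drule spec[of _ "Suc i"]) simp
    done
qed auto

lemma vld_const: "\<forall>x\<in>set w. x = c \<Longrightarrow> vld w"
  by (induction w rule: vld.induct) auto

fun mrg :: "nat \<Rightarrow> nat list \<Rightarrow> nat list \<Rightarrow> nat list" where
  "mrg u [] w = w"
| "mrg u (x # xs) [] = x # xs"
| "mrg u (x # xs) (y # ys) = (if y = Suc u then y # mrg u (x # xs) ys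
      else if x = u then x # mrg u xs ys else x # mrg u xs (y # ys))"

lemma mrg_Suc: "mrg u xs (Suc u # ys) = Suc u # mrg u xs ys"
  by (cases xs) auto

lemma first_ge:
  assumes "vld (z # r)" "z < u" "filter (\<lambda>x. u \<le> x) r = y # ys"
  shows "y \<le> u"
  using assms
proof (induction r arbitrary: z)
  case (Cons r0 rr)
  show ?case
  proof (cases "u \<le> r0")
    case True
    then show ?thesis using Cons.prems by auto
  next
    case False
    then show ?thesis using Cons.prems Cons.IH[of r0] by auto
  qed
qed auto

lemma mrg_recon:
  assumes "vld m" "\<forall>x\<in>set m. x \<le> Suc u"
  shows "mrg u (filter (\<lambda>x. x \<le> u) m) (filter (\<lambda>x. u \<le> x) m) = m"
  using assms
proof (induction m)
  case Nil
  then show ?case by simp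
next
  case (Cons z r)
  have vr: "vld r" using Cons.prems(1) by (simp add: vld_Cons)
  have IH: "mrg u (filter (\<lambda>x. x \<le> u) r) (filter (\<lambda>x. u \<le> x) r) = r"
    using Cons.IH vr Cons.prems(2) by auto
  consider "z = Suc u" | "z = u" | "z < u" using Cons.prems(2) by force
  then show ?case
  proof cases
    case 1
    then show ?thesis using IH by (simp add: mrg_Suc)
  next
    case 2
    then show ?thesis using IH by simp
  next
    case 3
    show ?thesis
    proof (cases "filter (\<lambda>x. u \<le> x) r")
      case Nil
      then have "\<forall>x\<in>set r. x < u" by (simp add: filter_empty_conv) (meson not_le)
      then have "filter (\<lambda>x. x \<le> u) r = r" by (auto simp: filter_id_conv)
      then show ?thesis using 3 Nil by simp
    next
      case (Cons y ys)
      have "y \<le> u" using first_ge[OF Cons.prems(1) 3 Cons] .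
      moreover have "u \<le> y" using Cons by (metis filter_eq_ConsD)
      ultimately have "y = u" by simp
      then show ?thesis using 3 Cons IH by simp
    qed
  qed
qed

lemma mrg_proj:
  assumes "\<forall>x\<in>set xs. x \<le> u" "\<forall>y\<in>set w. y = u \<or> y = Suc u" "count_list xs u = count_list w u"
  shows "filter (\<lambda>x. x \<le> u) (mrg u xs w) = xs \<and> filter (\<lambda>x. u \<le> x) (mrg u xs w) = w"
  using assms
proof (induction u xs w rule: mrg.induct)
  case (1 u w)
  then have "u \<notin> set w" by (simp add: count_list_0_iff)
  then have "\<forall>y\<in>set w. y = Suc u" using 1(2) 1(3) by metis
  then show ?case by (auto simp: filter_empty_conv filter_id_conv)
next
  case (2 u x xs)
  then have "u \<notin> set (x#xs)" by (metis count_list_0_iff count_list.simps(1))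
  then have "\<forall>y\<in>set (x#xs). y < u" using 2 le_neq_implies_less by blast
  then show ?case by (auto simp: filter_empty_conv filter_id_conv simp del: set_simps(2)) (auto)
next
  case (3 u x xs y ys)
  show ?case
  proof (cases "y = Suc u")
    case True
    then show ?thesis using 3 by auto
  next
    case False
    then have yu: "y = u" using 3 by auto
    show ?thesis
    proof (cases "x = u")
      case True
      then show ?thesis using 3 yu by auto
    next
      case False
      then have "x < u" using 3 by force
      then show ?thesis using 3 yu False by auto
    qed
  qed
qed

lemma mrg_vld:
  assumes "vld xs" "\<forall>x\<in>set xs. x \<le> u" "\<forall>y\<in>set w. y = u \<or> y = Suc u" "count_list xs u = count_list w u"
  shows "vld (mrg u xs w)"
  using assms
proof (induction u xs w rule: mrg.induct)
  case (1 u w)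
  then have "u \<notin> set w" by (simp add: count_list_0_iff)
  then have "\<forall>y\<in>set w. y = Suc u" using 1(2) 1(3) by metis
  then show ?case by (simp add: vld_const)
next
  case (2 u x xs)
  then show ?case by simp
next
  case (3 u x xs y ys)
  have hdle: "\<forall>z\<in>set (mrg u a b). z \<le> Suc u" if "\<forall>x\<in>set a. x \<le> u" "\<forall>y\<in>set b. y = u \<or> y = Suc u" for a b
    using that by (induction u a b rule: mrg.induct) auto
  show ?case
  proof (cases "y = Suc u")
    case True
    have "vld (mrg u (x # xs) ys)" using 3 True by auto
    moreover have "\<forall>z\<in>set (mrg u (x # xs) ys). z \<le> Suc u" using hdle[of "x#xs" ys] 3 by auto
    ultimately show ?thesis using True by (auto simp: vld_Cons split: list.split)
  next
    case False
    then have yu: "y = u" using 3 by auto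
    show ?thesis
    proof (cases "x = u")
      case True
      have "vld (mrg u xs ys)" using 3 True yu by (auto simp: vld_Cons)
      moreover have "\<forall>z\<in>set (mrg u xs ys). z \<le> Suc u" using hdle[of xs ys] 3 by auto
      ultimately show ?thesis using True yu by (auto simp: vld_Cons split: list.split)
    next
      case xne: False
      have v: "vld (mrg u xs (y # ys))" using 3 xne yu False by (auto simp: vld_Cons)
      show ?thesis
      proof (cases xs)
        case Nil
        then show ?thesis using 3 yu xne by simp
      next
        case (Cons x' xs')
        have "x' \<le> Suc x" using 3 Cons by simp
        then show ?thesis using v Cons yu xne False by (cases "x' = u") auto
      qed
    qed
  qed
qed

lemma vld_filter:
  assumes "vld m" "\<forall>x\<in>set m. x \<le> Suc u"
  shows "vld (filter (\<lambda>x. x \<le> u) m)"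
  using assms
proof (induction m)
  case Nil
  then show ?case by simp
next
  case (Cons z r)
  have vr: "vld r" using Cons.prems(1) by (simp add: vld_Cons)
  have IH: "vld (filter (\<lambda>x. x \<le> u) r)" using Cons.IH vr Cons.prems(2) by auto
  show ?case
  proof (cases "z \<le> u")
    case False
    then show ?thesis using IH by simp
  next
    case True
    have hd: "y \<le> Suc z" if hyp: "filter (\<lambda>x. x \<le> u) r = y # ys" for y ys
    proof -
      obtain r0 rr where r: "r = r0 # rr" using hyp by (cases r) auto
      have "r0 \<le> Suc z" using Cons.prems(1) r by simp
      show ?thesis
      proof (cases "r0 \<le> u")
        case True
        then show ?thesis using hyp r \<open>r0 \<le> Suc z\<close> by simp
      next
        case False
        then have "z = u" using \<open>r0 \<le> Suc z\<close> \<open>z \<le> u\<close> by simp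
        moreover have "y \<le> u" using hyp by (metis filter_eq_ConsD)
        ultimately show ?thesis by simp
      qed
    qed
    show ?thesis using True IH hd by (auto simp: vld_Cons split: list.split)
  qed
qed

lemma mset_split_ne:
  assumes "M \<noteq> {#}"
  shows "{w. mset w = M} = (\<Union>h\<in>set_mset M. (#) h ` {w. mset w = M - {#h#}})"
proof (rule set_eqI)
  fix w show "w \<in> {w. mset w = M} \<longleftrightarrow> w \<in> (\<Union>h\<in>set_mset M. (#) h ` {w. mset w = M - {#h#}})"
    using assms by (cases w) (auto simp: insert_DiffM)
qed

lemma cardW_aux:
  assumes "x \<noteq> y"
  shows "\<forall>a c. a + c = n \<longrightarrow> card {w. mset w = replicate_mset a x + replicate_mset c y} = (a + c) choose a"
proof (induction n)
  case 0
  then show ?case by simp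
next
  case (Suc n)
  show ?case
  proof (intro allI impI)
    fix a c assume ac: "a + c = Suc n"
    let ?M = "replicate_mset a x + replicate_mset c y"
    have ne: "?M \<noteq> {#}" using ac by auto
    have inj: "inj ((#) h)" for h :: 'a by (simp add: inj_def)
    consider "a = 0" | "c = 0" | "a > 0 \<and> c > 0" by auto
    then show "card {w. mset w = ?M} = (a + c) choose a"
    proof cases
      case 1
      then have c: "c = Suc n" using ac by simp
      have "{w. mset w = ?M} = (#) y ` {w. mset w = replicate_mset 0 x + replicate_mset n y}"
        using mset_split_ne[OF ne] 1 c by simp
      then have "card {w. mset w = ?M} = card {w. mset w = replicate_mset 0 x + replicate_mset n y}"
        using card_image[OF inj_on_subset[OF inj]] by simp
      also have "\<dots> = 1" using Suc.IH[rule_format, of 0 n] by simp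
      finally show ?thesis using 1 by simp
    next
      case 2
      then have a: "a = Suc n" using ac by simp
      have "{w. mset w = ?M} = (#) x ` {w. mset w = replicate_mset n x + replicate_mset 0 y}"
        using mset_split_ne[OF ne] 2 a by simp
      then have "card {w. mset w = ?M} = card {w. mset w = replicate_mset n x + replicate_mset 0 y}"
        using card_image[OF inj_on_subset[OF inj]] by simp
      also have "\<dots> = 1" using Suc.IH[rule_format, of n 0] by simp
      finally show ?thesis using 2 by simp
    next
      case 3
      then obtain a' c' where a': "a = Suc a'" and c': "c = Suc c'" by (metis gr0_implies_Suc)
      have sm: "set_mset ?M = {x, y}" using 3 by auto
      have d1: "?M - {#x#} = replicate_mset a' x + replicate_mset c y" using a' by simp
      have d2: "?M - {#y#} = replicate_mset a x + replicate_mset c' y" using c' assms by simp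
      have eq: "{w. mset w = ?M} = (#) x ` {w. mset w = replicate_mset a' x + replicate_mset c y}
          \<union> (#) y ` {w. mset w = replicate_mset a x + replicate_mset c' y}"
      proof -
        have e0: "{w. mset w = ?M} = (\<Union>h\<in>{x,y}. (#) h ` {w. mset w = ?M - {#h#}})"
          using mset_split_ne[OF ne] unfolding sm .
        show ?thesis unfolding e0 d1[symmetric] d2[symmetric] by simp
      qed
      have fin: "finite {w. mset w = M}" for M :: "'a multiset"
      proof -
        have "{w. mset w = M} \<subseteq> {w. set w \<subseteq> set_mset M \<and> length w = size M}" by auto
        moreover have "finite {w. set w \<subseteq> set_mset M \<and> length w = size M}"
          by (rule finite_lists_length_eq) simp
        ultimately show ?thesis by (rule finite_subset)
      qed
      have "card {w. mset w = ?M} = card ((#) x ` {w. mset w = replicate_mset a' x + replicate_mset c y})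
          + card ((#) y ` {w. mset w = replicate_mset a x + replicate_mset c' y})"
        unfolding eq by (rule card_Un_disjoint) (use fin assms in auto)
      also have "\<dots> = card {w. mset w = replicate_mset a' x + replicate_mset c y}
          + card {w. mset w = replicate_mset a x + replicate_mset c' y}"
        using card_image[OF inj_on_subset[OF inj]] by simp
      also have "\<dots> = ((a' + c) choose a') + ((a + c') choose a)"
      proof -
        have h1: "card {w. mset w = replicate_mset a' x + replicate_mset c y} = (a' + c) choose a'"
          by (rule Suc.IH[rule_format]) (use ac a' in simp)
        have h2: "card {w. mset w = replicate_mset a x + replicate_mset c' y} = (a + c') choose a"
          by (rule Suc.IH[rule_format]) (use ac c' in simp)
        show ?thesis by (simp only: h1 h2)
      qed
      also have "\<dots> = (a + c) choose a"
      proof -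
        have "a' + c = Suc (a' + c')" "a + c' = Suc (a' + c')" "a + c = Suc (Suc (a' + c'))" using a' c' by simp_all
        then show ?thesis using a' by (simp only: binomial_Suc_Suc)
      qed
      finally show ?thesis .
    qed
  qed
qed

lemma cardW:
  assumes "x \<noteq> y"
  shows "card {w. mset w = replicate_mset a x + replicate_mset c y} = (a + c) choose a"
  using cardW_aux[OF assms] by blast

lemma finite_mset_lists: "finite {w. mset w = M}"
proof -
  have "{w. mset w = M} \<subseteq> {w. set w \<subseteq> set_mset M \<and> length w = size M}" by auto
  moreover have "finite {w. set w \<subseteq> set_mset M \<and> length w = size M}"
    by (rule finite_lists_length_eq) simp
  ultimately show ?thesis by (rule finite_subset)
qed

definition V :: "nat multiset \<Rightarrow> nat list set" where
  "V C = {m. mset m = C \<and> vld m}"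

lemma V_step:
  assumes C: "\<forall>x\<in>#C. x \<le> Suc u"
  shows "card (V C) = card (V (filter_mset (\<lambda>x. x \<le> u) C)) * ((count C u + count C (Suc u)) choose count C u)"
proof -
  define C' where "C' = filter_mset (\<lambda>x. x \<le> u) C"
  define a where "a = count C u"
  define c where "c = count C (Suc u)"
  define W where "W = {w. mset w = replicate_mset a u + replicate_mset c (Suc u)}"
  define \<phi> where "\<phi> = (\<lambda>m::nat list. (filter (\<lambda>x. x \<le> u) m, filter (\<lambda>x. u \<le> x) m))"
  have cntC: "count C v = 0" if "v > Suc u" for v
  proof -
    have "v \<notin># C" using C that by auto
    then show ?thesis by (simp add: count_eq_zero_iff)
  qed
  have cntW: "count (replicate_mset a u + replicate_mset c (Suc u)) v = (if u \<le> v then count C v else 0)" for v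
    using cntC[of v] by (auto simp: a_def c_def)
  have inj: "inj_on \<phi> (V C)"
  proof (rule inj_onI)
    fix m1 m2 assume m1: "m1 \<in> V C" and m2: "m2 \<in> V C" and eq: "\<phi> m1 = \<phi> m2"
    have r1: "mrg u (filter (\<lambda>x. x \<le> u) m1) (filter (\<lambda>x. u \<le> x) m1) = m1"
      by (rule mrg_recon) (use m1 C in \<open>auto simp: V_def\<close>)
    have r2: "mrg u (filter (\<lambda>x. x \<le> u) m2) (filter (\<lambda>x. u \<le> x) m2) = m2"
      by (rule mrg_recon) (use m2 C in \<open>auto simp: V_def\<close>)
    have "filter (\<lambda>x. x \<le> u) m1 = filter (\<lambda>x. x \<le> u) m2" "filter (\<lambda>x. u \<le> x) m1 = filter (\<lambda>x. u \<le> x) m2"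
      using eq by (simp_all add: \<phi>_def)
    then show "m1 = m2" using r1 r2 by metis
  qed
  have img: "\<phi> ` V C = V C' \<times> W"
  proof (rule set_eqI)
    fix p
    show "p \<in> \<phi> ` V C \<longleftrightarrow> p \<in> V C' \<times> W"
    proof
      assume "p \<in> \<phi> ` V C"
      then obtain m where m: "m \<in> V C" and p: "p = \<phi> m" by auto
      have "vld (filter (\<lambda>x. x \<le> u) m)"
        by (rule vld_filter) (use m C in \<open>auto simp: V_def\<close>)
      moreover have "mset (filter (\<lambda>x. x \<le> u) m) = C'" using m by (simp add: V_def C'_def)
      moreover have "mset (filter (\<lambda>x. u \<le> x) m) = replicate_mset a u + replicate_mset c (Suc u)"
      proof -
        have "mset m = C" using m by (simp add: V_def)
        then have "mset (filter (\<lambda>x. u \<le> x) m) = filter_mset (\<lambda>x. u \<le> x) C" by simp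
        also have "\<dots> = replicate_mset a u + replicate_mset c (Suc u)"
          by (rule multiset_eqI) (simp only: cntW count_filter_mset)
        finally show ?thesis .
      qed
      ultimately show "p \<in> V C' \<times> W" using p by (simp add: \<phi>_def V_def W_def)
    next
      assume "p \<in> V C' \<times> W"
      then obtain m' w where p: "p = (m', w)" and m': "mset m' = C'" "vld m'"
        and w: "mset w = replicate_mset a u + replicate_mset c (Suc u)"
        by (auto simp: V_def W_def)
      have "set m' = set_mset C'" using m'(1) by (metis set_mset_mset)
      then have s1: "\<forall>x\<in>set m'. x \<le> u" by (simp add: C'_def)
      have s2: "\<forall>y\<in>set w. y = u \<or> y = Suc u"
      proof -
        have "set w = set_mset (replicate_mset a u + replicate_mset c (Suc u))" using w by (metis set_mset_mset)
        then show ?thesis by (auto split: if_splits)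
      qed
      have s3: "count_list m' u = count_list w u"
        using m'(1) w by (simp add: count_mset[symmetric] C'_def a_def)
      define m where "m = mrg u m' w"
      have pr: "filter (\<lambda>x. x \<le> u) m = m' \<and> filter (\<lambda>x. u \<le> x) m = w"
        unfolding m_def by (rule mrg_proj[OF s1 s2 s3])
      have vm: "vld m" unfolding m_def by (rule mrg_vld[OF m'(2) s1 s2 s3])
      have "mset m = C"
      proof (rule multiset_eqI)
        fix v
        show "count (mset m) v = count C v"
        proof (cases "v \<le> u")
          case True
          have "count (mset m) v = count (mset (filter (\<lambda>x. x \<le> u) m)) v"
            using True by simp
          also have "\<dots> = count C v" using pr m'(1) True by (simp add: C'_def)
          finally show ?thesis .
        next
          case False
          have "count (mset m) v = count (mset (filter (\<lambda>x. u \<le> x) m)) v"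
            using False by simp
          also have "\<dots> = count C v" using pr w False cntW[of v] by simp
          finally show ?thesis .
        qed
      qed
      then have "m \<in> V C" using vm by (simp add: V_def)
      moreover have "\<phi> m = p" using pr p by (simp add: \<phi>_def)
      ultimately show "p \<in> \<phi> ` V C" by blast
    qed
  qed
  have "card (V C) = card (V C' \<times> W)"
    using bij_betw_same_card[of \<phi>] inj img by (simp add: bij_betw_def)
  also have "\<dots> = card (V C') * card W" by (rule card_cartesian_product)
  also have "card W = (a + c) choose a" unfolding W_def by (rule cardW) simp
  finally show ?thesis by (simp add: C'_def a_def c_def)
qed

lemma cardV:
  "\<forall>x\<in>#C. x \<le> T \<Longrightarrow> card (V C) = (\<Prod>v<T. (count C v + count C (Suc v)) choose count C v)"
proof (induction T arbitrary: C)
  case 0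
  then have "\<forall>x\<in>#C. x = 0" by simp
  obtain xs0 where xs0: "mset xs0 = C" using ex_mset by blast
  have sub: "{w. mset w = C} \<subseteq> {replicate (size C) 0}"
  proof
    fix w assume "w \<in> {w. mset w = C}"
    then have "mset w = C" by simp
    then have "\<forall>y\<in>set w. y = 0" "length w = size C" using 0 by auto
    then show "w \<in> {replicate (size C) 0}" by (metis replicate_length_same singletonI)
  qed
  have "V C = {w. mset w = C}"
  proof -
    have "vld w" if "mset w = C" for w
      by (rule vld_const[of _ 0]) (use that 0 in auto)
    then show ?thesis by (auto simp: V_def)
  qed
  also have "\<dots> = {replicate (size C) 0}"
  proof -
    have "xs0 = replicate (size C) 0" using sub xs0 by auto
    then show ?thesis using sub xs0 by auto
  qed
  finally show ?case by simp
next
  case (Suc u)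
  let ?C' = "filter_mset (\<lambda>x. x \<le> u) C"
  have "card (V C) = card (V ?C') * ((count C u + count C (Suc u)) choose count C u)"
    by (rule V_step) (use Suc.prems in auto)
  also have "card (V ?C') = (\<Prod>v<u. (count ?C' v + count ?C' (Suc v)) choose count ?C' v)"
    by (rule Suc.IH) auto
  also have "\<dots> = (\<Prod>v<u. (count C v + count C (Suc v)) choose count C v)"
    by (rule prod.cong) auto
  finally show ?case by simp
qed

lemma part_Suc: "part \<alpha> (Suc i) = (if i < length \<alpha> then \<alpha> ! i else 0)"
  by (simp add: Defs.part_def)

lemma delta0: "delta \<alpha> k = card {i. i < length \<alpha> \<and> i < k \<and> k \<le> \<alpha> ! i + i}"
proof -
  have "{i. 1 \<le> i \<and> i \<le> k \<and> k \<le> part \<alpha> i + i - 1} = Suc ` {i. i < length \<alpha> \<and> i < k \<and> k \<le> \<alpha> ! i + i}"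
  proof (rule set_eqI)
    fix x
    show "x \<in> {i. 1 \<le> i \<and> i \<le> k \<and> k \<le> part \<alpha> i + i - 1} \<longleftrightarrow> x \<in> Suc ` {i. i < length \<alpha> \<and> i < k \<and> k \<le> \<alpha> ! i + i}"
      by (cases x) (auto simp: part_Suc)
  qed
  then show ?thesis unfolding delta_def by (simp add: card_image)
qed

definition A :: "nat \<Rightarrow> nat list \<Rightarrow> nat list" where
  "A q m = map (\<lambda>i. m ! i + q - i) [0..<q]"

definition Mq :: "nat \<Rightarrow> nat list \<Rightarrow> nat list" where
  "Mq q \<alpha> = map (\<lambda>i. \<alpha> ! i + i - q) [0..<q]"

lemma delta_A:
  assumes "length m = q"
  shows "delta (A q m) k = (if k \<le> q then k else length (filter (\<lambda>x. k - q \<le> x) m))"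
proof (cases "k \<le> q")
  case True
  have "{i. i < length (A q m) \<and> i < k \<and> k \<le> A q m ! i + i} = {..<k}"
    using True by (auto simp: A_def)
  then show ?thesis using True by (simp add: delta0)
next
  case False
  have "{i. i < length (A q m) \<and> i < k \<and> k \<le> A q m ! i + i} = {i. i < length m \<and> k - q \<le> m ! i}"
    using False assms by (auto simp: A_def)
  then show ?thesis using False by (simp add: delta0 length_filter_conv_card)
qed

lemma filter_ge_delta:
  assumes "length m = q"
  shows "length (filter (\<lambda>x. j \<le> x) m) = delta (A q m) (q + j)"
  using assms by (cases j) (auto simp: delta_A)

lemma len_filter_split: "length (filter (\<lambda>x. v \<le> x) m) = length (filter ((=) v) m) + length (filter (\<lambda>x. Suc v \<le> x) m)"
  by (induction m) auto

lemma count_delta: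
  assumes "length m = q"
  shows "count (mset m) v = delta (A q m) (q + v) - delta (A q m) (q + Suc v)"
  using len_filter_split[of v m] filter_ge_delta[OF assms, of v] filter_ge_delta[OF assms, of "Suc v"]
  by (simp add: count_mset count_list_eq_length_filter)

lemma mset_eq_delta:
  assumes "length m1 = q" "length m2 = q" "delta (A q m1) = delta (A q m2)"
  shows "mset m1 = mset m2"
  using assms by (simp add: multiset_eq_iff count_delta)

lemma len_filter_mset: "mset m1 = mset m2 \<Longrightarrow> length (filter P m1) = length (filter P m2)"
  by (metis mset_filter size_mset)

lemma delta_A_mset:
  assumes "length m1 = q" "mset m1 = mset m2"
  shows "delta (A q m1) = delta (A q m2)"
proof -
  have "length m2 = q" using assms by (metis size_mset)
  show ?thesis
  proof
    fix k
    show "delta (A q m1) k = delta (A q m2) k"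
      using len_filter_mset[OF assms(2), of "\<lambda>x. k - q \<le> x"] assms(1) \<open>length m2 = q\<close>
      by (simp add: delta_A)
  qed
qed

lemma card_filter_sum: "finite X \<Longrightarrow> card {i \<in> X. P i} = (\<Sum>i\<in>X. if P i then 1 else 0 :: nat)"
  by (simp add: sum.inter_filter[symmetric])

lemma sum_delta:
  assumes "\<forall>i<length \<alpha>. \<alpha> ! i + i \<le> N"
  shows "sum_list \<alpha> = (\<Sum>k\<in>{1..N}. delta \<alpha> k)"
proof -
  have "(\<Sum>k\<in>{1..N}. delta \<alpha> k) = (\<Sum>k\<in>{1..N}. \<Sum>i\<in>{..<length \<alpha>}. if i < k \<and> k \<le> \<alpha> ! i + i then 1 else 0)"
  proof (rule sum.cong)
    fix k
    have "delta \<alpha> k = card {i \<in> {..<length \<alpha>}. i < k \<and> k \<le> \<alpha> ! i + i}"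
      unfolding delta0 by (rule arg_cong[where f=card]) auto
    also have "\<dots> = (\<Sum>i\<in>{..<length \<alpha>}. if i < k \<and> k \<le> \<alpha> ! i + i then 1 else 0)"
      by (rule card_filter_sum) simp
    finally show "delta \<alpha> k = (\<Sum>i\<in>{..<length \<alpha>}. if i < k \<and> k \<le> \<alpha> ! i + i then 1 else 0)" .
  qed simp
  also have "\<dots> = (\<Sum>i\<in>{..<length \<alpha>}. \<Sum>k\<in>{1..N}. if i < k \<and> k \<le> \<alpha> ! i + i then 1 else 0)"
    by (rule sum.swap)
  also have "\<dots> = (\<Sum>i\<in>{..<length \<alpha>}. \<alpha> ! i)"
  proof (rule sum.cong)
    fix i assume i: "i \<in> {..<length \<alpha>}"
    have "{k \<in> {1..N}. i < k \<and> k \<le> \<alpha> ! i + i} = {i<..\<alpha> ! i + i}"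
      using assms i by auto
    then have "card {k \<in> {1..N}. i < k \<and> k \<le> \<alpha> ! i + i} = \<alpha> ! i" by simp
    moreover have "card {k \<in> {1..N}. i < k \<and> k \<le> \<alpha> ! i + i} = (\<Sum>k\<in>{1..N}. if i < k \<and> k \<le> \<alpha> ! i + i then 1 else 0)"
      by (rule card_filter_sum) simp
    ultimately show "(\<Sum>k\<in>{1..N}. if i < k \<and> k \<le> \<alpha> ! i + i then 1 else 0) = \<alpha> ! i"
      by simp
  qed simp
  also have "\<dots> = sum_list \<alpha>" by (simp add: sum_list_sum_nth atLeast0LessThan)
  finally show ?thesis by simp
qed

lemma nth_le_bound: "i < length \<alpha> \<Longrightarrow> \<alpha> ! i + i \<le> sum_list \<alpha> + length \<alpha>"
  using elem_le_sum_list[of i \<alpha>] by simp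

lemma sum_eq_delta:
  assumes "delta \<alpha> = delta \<beta>"
  shows "sum_list \<alpha> = sum_list \<beta>"
proof -
  define N where "N = sum_list \<alpha> + length \<alpha> + sum_list \<beta> + length \<beta>"
  have "sum_list \<alpha> = (\<Sum>k\<in>{1..N}. delta \<alpha> k)"
    by (rule sum_delta) (use nth_le_bound[of _ \<alpha>] in \<open>fastforce simp: N_def\<close>)
  also have "\<dots> = (\<Sum>k\<in>{1..N}. delta \<beta> k)" using assms by simp
  also have "\<dots> = sum_list \<beta>"
    by (rule sum_delta[symmetric]) (use nth_le_bound[of _ \<beta>] in \<open>fastforce simp: N_def\<close>)
  finally show ?thesis .
qed

lemma A_part:
  assumes "vld m" "length m = q" "delta (A q m) = delta \<alpha>" "\<alpha> \<in> partitions n"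
  shows "A q m \<in> partitions n"
proof -
  have st: "sorted_wrt (\<ge>) (A q m)"
  proof (subst sorted_wrt_iff_nth_Suc_transp)
    show "transp ((\<ge>) :: nat \<Rightarrow> nat \<Rightarrow> bool)" by (simp add: transp_def)
    show "\<forall>i. Suc i < length (A q m) \<longrightarrow> A q m ! Suc i \<le> A q m ! i"
    proof (intro allI impI)
      fix i assume i: "Suc i < length (A q m)"
      have "m ! Suc i \<le> Suc (m ! i)" using assms(1,2) i by (simp add: vld_nth A_def)
      then show "A q m ! Suc i \<le> A q m ! i" using i by (simp add: A_def)
    qed
  qed
  have pos: "\<forall>x\<in>set (A q m). 0 < x" by (auto simp: A_def)
  have "sum_list (A q m) = sum_list \<alpha>" by (rule sum_eq_delta[OF assms(3)])
  then show ?thesis using st pos assms(4) by (simp add: partitions_def)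
qed

lemma ivt_nat:
  fixes f :: "nat \<Rightarrow> nat"
  assumes "f a \<le> k" "k < f b" "a \<le> b" "\<forall>i. a \<le> i \<longrightarrow> i < b \<longrightarrow> f (Suc i) \<le> Suc (f i)"
  shows "\<exists>j. a \<le> j \<and> j < b \<and> f j = k"
  using assms
proof (induction b)
  case 0
  then show ?case by simp
next
  case (Suc b)
  show ?case
  proof (cases "a \<le> b \<and> k < f b")
    case True
    then obtain j where "a \<le> j \<and> j < b \<and> f j = k" using Suc.IH Suc.prems by auto
    then show ?thesis by (intro exI[of _ j]) auto
  next
    case False
    have "a \<noteq> Suc b" using Suc.prems by auto
    then have "a \<le> b" using Suc.prems by simp
    then have "f b \<le> k" using False by simp
    moreover have "f (Suc b) \<le> Suc (f b)" using Suc.prems \<open>a \<le> b\<close> by simp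
    ultimately have "f b = k" using Suc.prems by simp
    then show ?thesis using \<open>a \<le> b\<close> by (intro exI[of _ b]) auto
  qed
qed

definition sset :: "nat list \<Rightarrow> nat set" where
  "sset \<alpha> = {s. s \<le> length \<alpha> \<and> (\<forall>i<s. s \<le> \<alpha> ! i + i)}"

definition s0 :: "nat list \<Rightarrow> nat" where
  "s0 \<alpha> = Max (sset \<alpha>)"

lemma sset_fin: "finite (sset \<alpha>)"
  by (rule finite_subset[of _ "{..length \<alpha>}"]) (auto simp: sset_def)

lemma s0_in: "s0 \<alpha> \<in> sset \<alpha>"
  unfolding s0_def by (rule Max_in[OF sset_fin]) (auto simp: sset_def intro!: exI[of _ 0])

lemma s0_ge: "s \<in> sset \<alpha> \<Longrightarrow> s \<le> s0 \<alpha>"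
  unfolding s0_def by (rule Max_ge[OF sset_fin])

lemma part_sorted: "\<alpha> \<in> partitions n \<Longrightarrow> i \<le> j \<Longrightarrow> j < length \<alpha> \<Longrightarrow> \<alpha> ! j \<le> \<alpha> ! i"
  unfolding partitions_def
  by (cases "i = j") (auto simp: sorted_wrt_iff_nth_less)

lemma part_pos: "\<alpha> \<in> partitions n \<Longrightarrow> i < length \<alpha> \<Longrightarrow> 0 < \<alpha> ! i"
  unfolding partitions_def by (auto simp: nth_mem)

lemma delta_low: "k \<le> s0 \<alpha> \<Longrightarrow> delta \<alpha> k = k"
proof -
  assume k: "k \<le> s0 \<alpha>"
  have a: "s0 \<alpha> \<le> length \<alpha>" "\<forall>i<s0 \<alpha>. s0 \<alpha> \<le> \<alpha> ! i + i" using s0_in[of \<alpha>] by (auto simp: sset_def)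
  have "{i. i < length \<alpha> \<and> i < k \<and> k \<le> \<alpha> ! i + i} = {..<k}"
  proof (rule set_eqI)
    fix x
    show "x \<in> {i. i < length \<alpha> \<and> i < k \<and> k \<le> \<alpha> ! i + i} \<longleftrightarrow> x \<in> {..<k}"
    proof
      assume "x \<in> {..<k}"
      then have "x < k" by simp
      then have "x < s0 \<alpha>" using k by simp
      then have "s0 \<alpha> \<le> \<alpha> ! x + x" using a(2) by simp
      then show "x \<in> {i. i < length \<alpha> \<and> i < k \<and> k \<le> \<alpha> ! i + i}" using \<open>x < k\<close> k a(1) by simp
    qed simp
  qed
  then show ?thesis by (simp add: delta0)
qed

lemma delta_step:
  assumes P: "\<alpha> \<in> partitions n" and k: "s0 \<alpha> \<le> k"
  shows "delta \<alpha> (Suc k) \<le> delta \<alpha> k"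
proof -
  define S where "S = (\<lambda>k. {i. i < length \<alpha> \<and> i < k \<and> k \<le> \<alpha> ! i + i})"
  have finS: "finite (S k)" for k by (rule finite_subset[of _ "{..<length \<alpha>}"]) (auto simp: S_def)
  have dS: "delta \<alpha> k = card (S k)" for k by (simp add: delta0 S_def)
  show ?thesis
  proof (cases "length \<alpha> \<le> k")
    case True
    have "S (Suc k) \<subseteq> S k" using True by (auto simp: S_def)
    then show ?thesis by (simp add: dS card_mono finS)
  next
    case False
    then have kl: "k < length \<alpha>" by simp
    have "Suc (s0 \<alpha>) \<notin> sset \<alpha>" using s0_ge[of "Suc (s0 \<alpha>)" \<alpha>] by auto
    moreover have "Suc (s0 \<alpha>) \<le> length \<alpha>" using k kl by simp
    ultimately obtain i0 where i0: "i0 < Suc (s0 \<alpha>)" "\<alpha> ! i0 + i0 < Suc (s0 \<alpha>)"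
      by (auto simp: sset_def not_le)
    have "\<exists>j. i0 \<le> j \<and> j < k \<and> \<alpha> ! j + j = k"
    proof (rule ivt_nat[where f = "\<lambda>i. \<alpha> ! i + i"])
      show "\<alpha> ! i0 + i0 \<le> k" using i0 k by simp
      show "k < \<alpha> ! k + k" using part_pos[OF P kl] by simp
      show "i0 \<le> k" using i0 k by simp
      show "\<forall>i. i0 \<le> i \<longrightarrow> i < k \<longrightarrow> \<alpha> ! Suc i + Suc i \<le> Suc (\<alpha> ! i + i)"
        using part_sorted[OF P, of _ "Suc _"] kl by fastforce
    qed
    then obtain j where j: "j < k" "\<alpha> ! j + j = k" by auto
    have jS: "j \<in> S k" using j kl by (simp add: S_def)
    have "S (Suc k) \<subseteq> insert k (S k - {j})" using j by (auto simp: S_def)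
    then have "card (S (Suc k)) \<le> card (insert k (S k - {j}))" by (simp add: card_mono finS)
    also have "\<dots> \<le> Suc (card (S k - {j}))" by (simp add: card_insert_if finS)
    also have "\<dots> = card (S k)" using card_Suc_Diff1[OF finS jS] by simp
    finally show ?thesis by (simp add: dS)
  qed
qed

lemma delta_anti:
  assumes P: "\<alpha> \<in> partitions n" and "s0 \<alpha> \<le> k" "k \<le> k'"
  shows "delta \<alpha> k' \<le> delta \<alpha> k"
  using assms(3)
proof (induction k' rule: dec_induct)
  case base
  then show ?case by simp
next
  case (step k')
  then show ?case using delta_step[OF P, of k'] assms(2) by simp
qed

lemma delta_high: "\<alpha> \<in> partitions n \<Longrightarrow> s0 \<alpha> \<le> k \<Longrightarrow> delta \<alpha> k \<le> s0 \<alpha>"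
  using delta_anti[of \<alpha> n "s0 \<alpha>" k] delta_low[of "s0 \<alpha>" \<alpha>] by simp

lemma delta_bound: "delta \<alpha> k \<noteq> 0 \<Longrightarrow> k \<le> sum_list \<alpha> + length \<alpha>"
proof -
  assume "delta \<alpha> k \<noteq> 0"
  then obtain i where "i < length \<alpha>" "k \<le> \<alpha> ! i + i"
    by (auto simp: delta0 card_eq_0_iff)
  then show ?thesis using nth_le_bound[of i \<alpha>] by simp
qed

lemma s0_pos: "\<alpha> \<in> partitions n \<Longrightarrow> 0 < n \<Longrightarrow> 1 \<le> s0 \<alpha>"
proof -
  assume P: "\<alpha> \<in> partitions n" and n: "0 < n"
  then have "\<alpha> \<noteq> []" by (auto simp: partitions_def)
  then have "1 \<in> sset \<alpha>" using part_pos[OF P, of 0] by (auto simp: sset_def Suc_le_eq)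
  then show ?thesis by (rule s0_ge)
qed

lemma L_facts:
  assumes P: "\<alpha> \<in> partitions n" and n: "0 < n"
  defines "L \<equiv> Max {k. delta \<alpha> k \<noteq> 0}"
  shows "finite {k. delta \<alpha> k \<noteq> 0}" "s0 \<alpha> \<le> L" "delta \<alpha> L \<noteq> 0" "\<And>k. L < k \<Longrightarrow> delta \<alpha> k = 0"
    "Max (delta \<alpha> ` {1..L}) = s0 \<alpha>"
proof -
  show fin: "finite {k. delta \<alpha> k \<noteq> 0}"
    by (rule finite_subset[of _ "{..sum_list \<alpha> + length \<alpha>}"]) (auto intro!: delta_bound)
  have s1: "1 \<le> s0 \<alpha>" by (rule s0_pos[OF P n])
  have "delta \<alpha> (s0 \<alpha>) \<noteq> 0" using delta_low[of "s0 \<alpha>" \<alpha>] s1 by simp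
  then show sL: "s0 \<alpha> \<le> L" unfolding L_def by (intro Max_ge[OF fin]) simp
  have "L \<in> {k. delta \<alpha> k \<noteq> 0}" unfolding L_def
    by (rule Max_in[OF fin]) (use \<open>delta \<alpha> (s0 \<alpha>) \<noteq> 0\<close> in auto)
  then show "delta \<alpha> L \<noteq> 0" by simp
  show "\<And>k. L < k \<Longrightarrow> delta \<alpha> k = 0"
  proof (rule ccontr)
    fix k assume "L < k" "delta \<alpha> k \<noteq> 0"
    then have "k \<le> L" unfolding L_def by (intro Max_ge[OF fin]) simp
    then show False using \<open>L < k\<close> by simp
  qed
  show "Max (delta \<alpha> ` {1..L}) = s0 \<alpha>"
  proof (rule Max_eqI)
    show "finite (delta \<alpha> ` {1..L})" by simp
    fix y assume "y \<in> delta \<alpha> ` {1..L}"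
    then obtain k where "y = delta \<alpha> k" by auto
    then show "y \<le> s0 \<alpha>"
      using delta_low[of k \<alpha>] delta_high[OF P, of k] by (cases "k \<le> s0 \<alpha>") auto
  next
    show "s0 \<alpha> \<in> delta \<alpha> ` {1..L}"
      using delta_low[of "s0 \<alpha>" \<alpha>] s1 sL by (intro image_eqI[of _ _ "s0 \<alpha>"]) auto
  qed
qed

theorem proposition4p4:
  fixes n :: nat and d :: "nat \<Rightarrow> nat"
  assumes "0 < n" and "d \<in> Delta n"
  defines "L \<equiv> Max {k. d k \<noteq> 0}"
  defines "q \<equiv> Max (d ` {1..L})"
  defines "b \<equiv> (\<lambda>i. if i < L then d i - d (Suc i) else d L)"
  shows "card (diag_class_k n d q) = card (diag_class n d \<inter> partitions_k n q)
       \<and> card (diag_class n d \<inter> partitions_k n q)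
           = (\<Prod>i\<in>{q..<L}. (b i + b (Suc i)) choose (b i))"
proof -
  have first: "diag_class_k n d q = diag_class n d \<inter> partitions_k n q" by (simp add: diag_class_k_def)
  obtain \<alpha>0 where \<alpha>0: "\<alpha>0 \<in> partitions n" "delta \<alpha>0 = d" using assms(2) by (auto simp: Delta_def)
  note LF = L_facts[OF \<alpha>0(1) assms(1)]
  have qs: "q = s0 \<alpha>0" unfolding q_def L_def using LF(5) \<alpha>0(2) by simp
  have finL: "finite {k. d k \<noteq> 0}" using LF(1) \<alpha>0(2) by simp
  have dL: "d L \<noteq> 0" using LF(3) \<alpha>0(2) unfolding L_def by simp
  have dgt: "d k = 0" if "L < k" for k
  proof -
    have "Max {k. delta \<alpha>0 k \<noteq> 0} < k" using that \<alpha>0(2) unfolding L_def by simp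
    from LF(4)[OF this] show ?thesis using \<alpha>0(2) by simp
  qed
  have sL: "s0 \<alpha>0 \<le> L" using LF(2) \<alpha>0(2) unfolding L_def by simp
  have qL: "q \<le> L" using sL qs by simp
  have dlow: "\<And>k. k \<le> q \<Longrightarrow> d k = k" using delta_low[of _ \<alpha>0] qs \<alpha>0(2) by simp
  have danti: "\<And>k k'. q \<le> k \<Longrightarrow> k \<le> k' \<Longrightarrow> d k' \<le> d k"
    using delta_anti[OF \<alpha>0(1)] qs \<alpha>0(2) by simp
  have dhigh: "\<And>k. q \<le> k \<Longrightarrow> d k \<le> q" using delta_high[OF \<alpha>0(1)] qs \<alpha>0(2) by simp
  define B where "B = sum_list \<alpha>0 + length \<alpha>0"
  have dB: "\<And>k. d k \<noteq> 0 \<Longrightarrow> k \<le> B" using delta_bound[of \<alpha>0] \<alpha>0(2) B_def by simp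
  have q1: "1 \<le> q" using s0_pos[OF \<alpha>0(1) assms(1)] qs by simp
  have dLe: "\<And>k. d k \<noteq> 0 \<Longrightarrow> k \<le> L" by (metis dgt leI)

  define m1 where "m1 = map (\<lambda>i. card {j \<in> {1..B}. i < d (q + j)}) [0..<q]"
  have len1: "length m1 = q" by (simp add: m1_def)
  have key: "j \<le> m1 ! i \<longleftrightarrow> i < d (q + j)" if j: "1 \<le> j" and i: "i < q" for i j
  proof
    assume h: "i < d (q + j)"
    then have "q + j \<le> B" using dB by fastforce
    have "{1..j} \<subseteq> {j' \<in> {1..B}. i < d (q + j')}"
    proof
      fix j' assume "j' \<in> {1..j}"
      then have "d (q + j) \<le> d (q + j')" using danti[of "q + j'" "q + j"] by simp
      then show "j' \<in> {j' \<in> {1..B}. i < d (q + j')}" using h \<open>j' \<in> {1..j}\<close> \<open>q + j \<le> B\<close> by auto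
    qed
    then have "card {1..j} \<le> card {j' \<in> {1..B}. i < d (q + j')}" by (rule card_mono[rotated]) simp
    then show "j \<le> m1 ! i" using i by (simp add: m1_def)
  next
    assume h: "j \<le> m1 ! i"
    show "i < d (q + j)"
    proof (rule ccontr)
      assume "\<not> i < d (q + j)"
      then have "{j' \<in> {1..B}. i < d (q + j')} \<subseteq> {1..<j}"
      proof (intro subsetI)
        fix j' assume j': "j' \<in> {j' \<in> {1..B}. i < d (q + j')}"
        show "j' \<in> {1..<j}"
        proof (rule ccontr)
          assume "j' \<notin> {1..<j}"
          then have "j \<le> j'" using j' by auto
          then have "d (q + j') \<le> d (q + j)" using danti[of "q + j" "q + j'"] by simp
          then show False using j' \<open>\<not> i < d (q + j)\<close> by simp
        qed
      qed
      then have "card {j' \<in> {1..B}. i < d (q + j')} \<le> card {1..<j}" by (rule card_mono[rotated]) simp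
      then have "m1 ! i \<le> j - 1" using i by (simp add: m1_def)
      then show False using h j by simp
    qed
  qed
  have delta1: "delta (A q m1) = d"
  proof
    fix k
    show "delta (A q m1) k = d k"
    proof (cases "k \<le> q")
      case True
      then show ?thesis using delta_A[OF len1] dlow by simp
    next
      case False
      have "delta (A q m1) k = card {i. i < q \<and> k - q \<le> m1 ! i}"
        using False delta_A[OF len1] len1 by (simp add: length_filter_conv_card)
      also have "{i. i < q \<and> k - q \<le> m1 ! i} = {..<d k}"
      proof -
        have "{i. i < q \<and> k - q \<le> m1 ! i} = {i. i < q \<and> i < d k}"
          using key[of "k - q"] False by auto
        also have "\<dots> = {..<d k}" using dhigh[of k] False by auto
        finally show ?thesis .
      qed
      finally show ?thesis by simp
    qed
  qed
  have vld1: "vld m1"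
    unfolding vld_nth
  proof (intro allI impI)
    fix i assume i: "Suc i < length m1"
    have "{j \<in> {1..B}. Suc i < d (q + j)} \<subseteq> {j \<in> {1..B}. i < d (q + j)}" by auto
    then have "card {j \<in> {1..B}. Suc i < d (q + j)} \<le> card {j \<in> {1..B}. i < d (q + j)}"
      by (rule card_mono[rotated]) simp
    then show "m1 ! Suc i \<le> Suc (m1 ! i)" using i len1 by (simp add: m1_def)
  qed
  have P1: "A q m1 \<in> partitions n" by (rule A_part[OF vld1 len1 _ \<alpha>0(1)]) (simp add: delta1 \<alpha>0(2))

  define C where "C = mset m1"
  define S where "S = diag_class n d \<inter> partitions_k n q"
  have Sform: "S = {\<alpha>. \<alpha> \<in> partitions n \<and> delta \<alpha> = d \<and> length \<alpha> = q}"
    by (auto simp: S_def diag_class_def partitions_k_def)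
  have stair: "\<forall>i<q. q \<le> \<alpha> ! i + i" if "\<alpha> \<in> S" for \<alpha>
  proof -
    have P: "\<alpha> \<in> partitions n" "delta \<alpha> = d" using that by (auto simp: Sform)
    have "q = s0 \<alpha>" unfolding q_def L_def using L_facts(5)[OF P(1) assms(1)] P(2) by simp
    then show ?thesis using s0_in[of \<alpha>] by (simp add: sset_def)
  qed
  have lenC: "length m = q" if "m \<in> V C" for m
  proof -
    have "mset m = mset m1" using that by (simp add: V_def C_def)
    then have "length m = length m1" by (metis size_mset)
    then show ?thesis using len1 by simp
  qed
  have inj: "inj_on (A q) (V C)"
  proof (rule inj_onI)
    fix m m' assume m: "m \<in> V C" and m': "m' \<in> V C" and eq: "A q m = A q m'"
    show "m = m'"
    proof (rule nth_equalityI)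
      show "length m = length m'" using lenC[OF m] lenC[OF m'] by simp
      fix i assume i: "i < length m"
      then have "A q m ! i = A q m' ! i" using eq by simp
      then show "m ! i = m' ! i" using i lenC[OF m] by (simp add: A_def)
    qed
  qed
  have SV: "S = A q ` V C"
  proof (rule set_eqI)
    fix \<alpha>
    show "\<alpha> \<in> S \<longleftrightarrow> \<alpha> \<in> A q ` V C"
    proof
      assume aS: "\<alpha> \<in> S"
      have P: "\<alpha> \<in> partitions n" "delta \<alpha> = d" "length \<alpha> = q" using aS by (auto simp: Sform)
      have st: "\<forall>i<q. q \<le> \<alpha> ! i + i" by (rule stair[OF aS])
      define m where "m = Mq q \<alpha>"
      have lm: "length m = q" by (simp add: m_def Mq_def)
      have Am: "A q m = \<alpha>"
      proof (rule nth_equalityI)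
        show "length (A q m) = length \<alpha>" using P by (simp add: A_def)
        fix i assume "i < length (A q m)"
        then have "i < q" by (simp add: A_def)
        then show "A q m ! i = \<alpha> ! i" using st by (simp add: A_def m_def Mq_def)
      qed
      have vm: "vld m"
        unfolding vld_nth
      proof (intro allI impI)
        fix i assume i: "Suc i < length m"
        then have "\<alpha> ! Suc i \<le> \<alpha> ! i" using part_sorted[OF P(1), of i "Suc i"] P(3) lm by simp
        then show "m ! Suc i \<le> Suc (m ! i)" using i lm st by (simp add: m_def Mq_def)
      qed
      have "mset m = mset m1"
        by (rule mset_eq_delta[OF lm len1]) (simp add: Am P(2) delta1)
      then have "m \<in> V C" using vm by (simp add: V_def C_def)
      then show "\<alpha> \<in> A q ` V C" using Am by blast
    next
      assume "\<alpha> \<in> A q ` V C"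
      then obtain m where m: "m \<in> V C" and a: "\<alpha> = A q m" by auto
      have lm: "length m = q" by (rule lenC[OF m])
      have ms: "mset m = mset m1" "vld m" using m by (auto simp: V_def C_def)
      have dm: "delta (A q m) = d" using delta_A_mset[OF lm, of m1] ms(1) delta1 by simp
      have "A q m \<in> partitions n" by (rule A_part[OF ms(2) lm _ \<alpha>0(1)]) (simp add: dm \<alpha>0(2))
      then show "\<alpha> \<in> S" using a dm by (simp add: Sform A_def)
    qed
  qed
  have cardS: "card S = card (V C)" using SV inj by (simp add: card_image)
  have bnd: "\<forall>x\<in>#C. x \<le> L - q"
  proof
    fix x assume "x \<in># C"
    then have "x \<in> set m1" by (simp add: C_def)
    then have "filter (\<lambda>y. x \<le> y) m1 \<noteq> []" by (auto simp: filter_empty_conv)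
    then have "length (filter (\<lambda>y. x \<le> y) m1) \<noteq> 0" by simp
    then have "d (q + x) \<noteq> 0" using filter_ge_delta[OF len1, of x] delta1 by simp
    then show "x \<le> L - q" using dLe by fastforce
  qed
  have cnt: "count C v = b (q + v)" if "v \<le> L - q" for v
  proof -
    have "count C v = d (q + v) - d (q + Suc v)" using count_delta[OF len1, of v] delta1 by (simp add: C_def)
    show ?thesis
    proof (cases "q + v < L")
      case True
      then show ?thesis using \<open>count C v = _\<close> by (simp add: b_def)
    next
      case False
      then have "q + v = L" using that qL by simp
      then show ?thesis using \<open>count C v = _\<close> dgt[of "Suc L"] by (simp add: b_def)
    qed
  qed
  have "card (V C) = (\<Prod>v<L - q. (count C v + count C (Suc v)) choose count C v)"
    by (rule cardV[OF bnd])
  also have "\<dots> = (\<Prod>v\<in>{0..<L - q}. (b (v + q) + b (Suc (v + q))) choose b (v + q))"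
    by (rule prod.cong) (auto simp: cnt add.commute lessThan_atLeast0)
  also have "\<dots> = (\<Prod>i\<in>{0 + q..<(L - q) + q}. (b i + b (Suc i)) choose b i)"
    by (rule prod.shift_bounds_nat_ivl[symmetric])
  also have "{0 + q..<(L - q) + q} = {q..<L}" using qL by simp
  finally show ?thesis using first cardS by (simp add: S_def)
qed

end
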